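(* Consider group testing with $p$ items, $k=\Theta(p^\theta)$ defectives ($\theta\in(0,1)$), i.i.d. Bernoulli testing with parameter $\nu>0$, and $Z$-channel noise with parameter $\rho\in(0,1)$. For a defective item $i\in S$, let $M_i^+$ (resp. $M_i^-$) be the number of positive (resp. negative) tests containing $i$ and no other defective item. Fix $\gamma>0$ and $\rho\le\Psi<1$, and let $d=\Psi\nu e^{-\nu}\gamma\log p$ and $n=\gamma k\log p$. If $\theta>e^{-\nu}\nu\gamma(D_\rho(\Psi)+1-\rho)$, then with probability tending to one as $p\to\infty$ there exists a defective item $i\in S$ with $M_i^+=0$ and $M_i^-\ge d$.
   Context: Setup: unknown defective set $S$ uniform among size-$k$ subsets of $\{1,\dots,p\}$, $p\to\infty$. Test matrix $\mathbf X\in\{0,1\}^{n\times p}$ with i.i.d. Bernoulli$(\nu/k)$ entries ($X_{ij}=1$ iff item $j$ is in test $i$). Noiseless outcome $U_i=\bigvee_{j\in S}X_{ij}$; observed outcome $Y_i$ obtained independently via the $Z$-channel: $P(Y=0|U=0)=1$, $P(Y=0|U=1)=\rho$, $P(Y=1|U=1)=1-\rho$. Positive test: $Y_i=1$; negative test: $Y_i=0$. Natural logarithms. $D_\gamma(t)=t\log(t/\gamma)-t+\gamma$ for $\gamma>0$, $t\ge0$. *)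

theory Defs
  imports "HOL-Probability.Probability" "HOL-Library.Landau_Symbols"
begin

definition Dfun :: "real \<Rightarrow> real \<Rightarrow> real" where
  "Dfun g t = t * ln (t / g) - t + g"

definition gt_pmf ::
  "nat \<Rightarrow> nat \<Rightarrow> nat \<Rightarrow> real \<Rightarrow> real \<Rightarrow>
   (nat set \<times> (nat \<times> nat \<Rightarrow> bool) \<times> (nat \<Rightarrow> bool)) pmf" where
  "gt_pmf p k n \<nu> \<rho> =
     do {
       S \<leftarrow> pmf_of_set {S. S \<subseteq> {1..p} \<and> card S = k};
       X \<leftarrow> Pi_pmf ({0..<n} \<times> {1..p}) False (\<lambda>_. bernoulli_pmf (\<nu> / real k));
       Y \<leftarrow> Pi_pmf {0..<n} False
              (\<lambda>t. if (\<exists>j\<in>S. X (t, j)) then bernoulli_pmf (1 - \<rho>) else return_pmf False);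
       return_pmf (S, X, Y)
     }"

definition Mplus :: "nat \<Rightarrow> nat set \<Rightarrow> (nat \<times> nat \<Rightarrow> bool) \<Rightarrow> (nat \<Rightarrow> bool) \<Rightarrow> nat \<Rightarrow> nat" where
  "Mplus n S X Y i = card {t \<in> {0..<n}. X (t, i) \<and> (\<forall>j\<in>S - {i}. \<not> X (t, j)) \<and> Y t}"

definition Mminus :: "nat \<Rightarrow> nat set \<Rightarrow> (nat \<times> nat \<Rightarrow> bool) \<Rightarrow> (nat \<Rightarrow> bool) \<Rightarrow> nat \<Rightarrow> nat" where
  "Mminus n S X Y i = card {t \<in> {0..<n}. X (t, i) \<and> (\<forall>j\<in>S - {i}. \<not> X (t, j)) \<and> \<not> Y t}"

end

theory Submission
  imports Defs "HOL-Real_Asymp.Real_Asymp"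
begin

lemma prob_bind_pmf:
  "measure_pmf.prob (bind_pmf M f) A = measure_pmf.expectation M (\<lambda>x. measure_pmf.prob (f x) A)"
  unfolding measure_pmf_bind
proof (rule measure_pmf.measure_bind[where N="count_space UNIV"])
  show "(\<lambda>x. measure_pmf (f x)) \<in> measure_pmf M \<rightarrow>\<^sub>M subprob_algebra (count_space UNIV)"
    by (simp add: measurable_count_space_eq1 measure_pmf_in_subprob_algebra cong: measurable_cong_sets)
qed simp

lemma prob_bind_pmf_ge:
  assumes "\<And>x. x \<in> set_pmf M \<Longrightarrow> measure_pmf.prob (f x) A \<ge> c"
  shows "measure_pmf.prob (bind_pmf M f) A \<ge> c"
proof -
  have "measure_pmf.expectation M (\<lambda>x. c) \<le> measure_pmf.expectation M (\<lambda>x. measure_pmf.prob (f x) A)"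
    by (intro integral_mono_AE) (auto simp: AE_measure_pmf_iff assms intro!: measure_pmf.integrable_const_bound[where B=1])
  thus ?thesis by (simp add: prob_bind_pmf)
qed

lemma Pi_pmf_map_dep:
  assumes [simp]: "finite A"
  shows "Pi_pmf A d' (\<lambda>x. map_pmf (f x) (g x)) =
         map_pmf (\<lambda>h x. if x \<in> A then f x (h x) else d') (Pi_pmf A dflt g)"
proof -
  have "Pi_pmf A d' (\<lambda>x. map_pmf (f x) (g x)) =
          Pi_pmf A d' (\<lambda>x. g x \<bind> (\<lambda>y. return_pmf (f x y)))"
    by (simp only: map_pmf_def)
  also have "\<dots> = Pi_pmf A dflt g \<bind> (\<lambda>h. Pi_pmf A d' (\<lambda>x. return_pmf (f x (h x))))"
    by (subst Pi_pmf_bind[where d' = dflt]) auto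
  also have "\<dots> = map_pmf (\<lambda>h x. if x \<in> A then f x (h x) else d') (Pi_pmf A dflt g)"
    unfolding map_pmf_def by simp
  finally show ?thesis .
qed

lemma Pi_pmf_curry:
  assumes "finite A" "finite B"
  shows "map_pmf curry (Pi_pmf (A \<times> B) dflt (\<lambda>_. D)) =
         Pi_pmf A (\<lambda>_. dflt) (\<lambda>_. Pi_pmf B dflt (\<lambda>_. D))"
proof (rule pmf_eqI)
  fix g :: "'a \<Rightarrow> 'b \<Rightarrow> 'c"
  have inj: "inj curry" by (rule inj_on_inverseI[of _ case_prod]) simp
  have "pmf (map_pmf curry (Pi_pmf (A \<times> B) dflt (\<lambda>_. D))) g = pmf (Pi_pmf (A \<times> B) dflt (\<lambda>_. D)) (case_prod g)"
    using pmf_map_inj'[OF inj, of "Pi_pmf (A \<times> B) dflt (\<lambda>_. D)" "case_prod g"] by simp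
  also have "\<dots> = pmf (Pi_pmf A (\<lambda>_. dflt) (\<lambda>_. Pi_pmf B dflt (\<lambda>_. D))) g"
  proof (cases "\<forall>x. x \<notin> A \<times> B \<longrightarrow> case_prod g x = dflt")
    case True
    hence g1: "\<forall>x. x \<notin> A \<longrightarrow> g x = (\<lambda>_. dflt)" by (auto simp: fun_eq_iff)
    have g2: "\<forall>y. y \<notin> B \<longrightarrow> g x y = dflt" if "x \<in> A" for x using True that by auto
    have "pmf (Pi_pmf (A \<times> B) dflt (\<lambda>_. D)) (case_prod g) = (\<Prod>z\<in>A \<times> B. pmf D (case_prod g z))"
      using True assms by (simp add: pmf_Pi)
    also have "\<dots> = (\<Prod>x\<in>A. \<Prod>y\<in>B. pmf D (g x y))"
      by (simp add: prod.cartesian_product split_def)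
    also have "\<dots> = (\<Prod>x\<in>A. pmf (Pi_pmf B dflt (\<lambda>_. D)) (g x))"
      using g2 assms by (intro prod.cong refl) (simp add: pmf_Pi)
    also have "\<dots> = pmf (Pi_pmf A (\<lambda>_. dflt) (\<lambda>_. Pi_pmf B dflt (\<lambda>_. D))) g"
      using g1 assms by (simp add: pmf_Pi)
    finally show ?thesis .
  next
    case False
    then obtain x y where xy: "(x,y) \<notin> A \<times> B" "g x y \<noteq> dflt" by auto
    have "pmf (Pi_pmf A (\<lambda>_. dflt) (\<lambda>_. Pi_pmf B dflt (\<lambda>_. D))) g = 0"
    proof (cases "x \<in> A")
      case True
      hence "y \<notin> B" using xy by auto
      hence z: "pmf (Pi_pmf B dflt (\<lambda>_. D)) (g x) = 0" using xy assms by (intro pmf_Pi_outside) auto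
      have "(\<Prod>x\<in>A. pmf (Pi_pmf B dflt (\<lambda>_. D)) (g x)) = 0"
        using z True assms(1) by (intro prod_zero) blast+
      thus ?thesis by (simp add: pmf_Pi assms)
    next
      case False
      have "g x \<noteq> (\<lambda>_. dflt)" using xy by metis
      thus ?thesis using False assms by (intro pmf_Pi_outside) blast+
    qed
    moreover have "pmf (Pi_pmf (A \<times> B) dflt (\<lambda>_. D)) (case_prod g) = 0"
      using False assms by (intro pmf_Pi_outside) auto
    ultimately show ?thesis by simp
  qed
  finally show "pmf (map_pmf curry (Pi_pmf (A \<times> B) dflt (\<lambda>_. D))) g = pmf (Pi_pmf A (\<lambda>_. dflt) (\<lambda>_. Pi_pmf B dflt (\<lambda>_. D))) g" .
qed

lemma row_law:
  fixes h :: "('b \<Rightarrow> bool) \<Rightarrow> bool pmf"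
  assumes fA: "finite A" and fB: "finite B"
  shows "map_pmf (\<lambda>(X,Y) t. ((\<lambda>j. X(t,j)), Y t))
           (do {X \<leftarrow> Pi_pmf (A \<times> B) False (\<lambda>_. D);
                Y \<leftarrow> Pi_pmf A False (\<lambda>t. h (\<lambda>j. X (t,j)));
                return_pmf (X,Y)})
       = Pi_pmf A ((\<lambda>_. False), False) (\<lambda>_. do {x \<leftarrow> Pi_pmf B False (\<lambda>_. D); y \<leftarrow> h x; return_pmf (x,y)})"
    (is "?L = ?R")
proof -
  define PA where "PA = Pi_pmf A (\<lambda>_. False) (\<lambda>_. Pi_pmf B False (\<lambda>_. D))"
  have M: "Pi_pmf (A \<times> B) False (\<lambda>_. D) = map_pmf case_prod PA"
    unfolding PA_def by (simp only: Pi_pmf_curry[symmetric, OF fA fB] pmf.map_comp o_def case_prod_curry pmf.map_ident)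
  have "?L = do {F \<leftarrow> PA; map_pmf (\<lambda>Y t. (F t, Y t)) (Pi_pmf A False (\<lambda>t. h (F t)))}"
  proof -
    have e1: "bind_pmf P (\<lambda>Y. return_pmf (X, Y)) = map_pmf (Pair X) P" for P :: "('c \<Rightarrow> bool) pmf" and X :: "'c \<times> 'b \<Rightarrow> bool"
      by (simp only: map_pmf_def)
    have "?L = bind_pmf (Pi_pmf (A \<times> B) False (\<lambda>_. D)) (\<lambda>X. map_pmf (\<lambda>(X,Y) t. ((\<lambda>j. X(t,j)), Y t)) (map_pmf (Pair X) (Pi_pmf A False (\<lambda>t. h (\<lambda>j. X (t,j))))))"
      by (simp only: e1 map_bind_pmf)
    also have "\<dots> = bind_pmf (Pi_pmf (A \<times> B) False (\<lambda>_. D)) (\<lambda>X. map_pmf (\<lambda>Y t. ((\<lambda>j. X(t,j)), Y t)) (Pi_pmf A False (\<lambda>t. h (\<lambda>j. X (t,j)))))"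
      by (simp only: pmf.map_comp o_def prod.case)
    also have "\<dots> = bind_pmf PA (\<lambda>F. map_pmf (\<lambda>Y t. ((\<lambda>j. case_prod F (t,j)), Y t)) (Pi_pmf A False (\<lambda>t. h (\<lambda>j. case_prod F (t,j)))))"
      by (simp only: M bind_map_pmf)
    also have "\<dots> = do {F \<leftarrow> PA; map_pmf (\<lambda>Y t. (F t, Y t)) (Pi_pmf A False (\<lambda>t. h (F t)))}"
      by simp
    finally show ?thesis .
  qed
  also have "\<dots> = ?R"
  proof -
    have "?R = Pi_pmf A ((\<lambda>_. False), False) (\<lambda>_. bind_pmf (Pi_pmf B False (\<lambda>_. D)) (\<lambda>x. map_pmf (Pair x) (h x)))"
      by (simp only: map_pmf_def)
    also have "\<dots> = do {F \<leftarrow> PA; Pi_pmf A ((\<lambda>_. False), False) (\<lambda>t. map_pmf (Pair (F t)) (h (F t)))}"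
      unfolding PA_def by (rule Pi_pmf_bind[OF fA])
    also have "\<dots> = do {F \<leftarrow> PA; map_pmf (\<lambda>Y x. if x \<in> A then (F x, Y x) else ((\<lambda>_. False), False)) (Pi_pmf A False (\<lambda>t. h (F t)))}"
      by (simp only: Pi_pmf_map_dep[OF fA, where dflt=False])
    also have "\<dots> = do {F \<leftarrow> PA; map_pmf (\<lambda>Y t. (F t, Y t)) (Pi_pmf A False (\<lambda>t. h (F t)))}"
    proof (intro bind_pmf_cong refl map_pmf_cong)
      fix F Y assume F: "F \<in> set_pmf PA" and Y: "Y \<in> set_pmf (Pi_pmf A False (\<lambda>t. h (F t)))"
      have "F x = (\<lambda>_. False)" if "x \<notin> A" for x
        using F set_Pi_pmf_subset[OF fA, of "\<lambda>_. False" "\<lambda>_. Pi_pmf B False (\<lambda>_. D)"] that unfolding PA_def by blast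
      moreover have "Y x = False" if "x \<notin> A" for x
        using Y set_Pi_pmf_subset[OF fA, of False "\<lambda>t. h (F t)"] that by blast
      ultimately show "(\<lambda>x. if x \<in> A then (F x, Y x) else ((\<lambda>_. False), False)) = (\<lambda>t. (F t, Y t))"
        by (auto simp: fun_eq_iff)
    qed
    finally show ?thesis by (rule sym)
  qed
  finally show ?thesis .
qed

lemma prod_if_const:
  assumes "finite A" "T \<subseteq> A"
  shows "(\<Prod>t\<in>A. if t \<in> T then a else b) = (a::real) ^ card T * b ^ (card A - card T)"
proof -
  have "(\<Prod>t\<in>A. if t \<in> T then a else b) = (\<Prod>t\<in>A \<inter> {x. x \<in> T}. a) * (\<Prod>t\<in>A \<inter> - {x. x \<in> T}. b)"
    using assms(1) by (rule prod.If_cases)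
  also have "\<dots> = a ^ card (A \<inter> {x. x \<in> T}) * b ^ card (A \<inter> - {x. x \<in> T})" by simp
  also have "A \<inter> {x. x \<in> T} = T" using assms by auto
  also have "A \<inter> - {x. x \<in> T} = A - T" by auto
  also have "card (A - T) = card A - card T" using assms by (simp add: card_Diff_subset finite_subset)
  finally show ?thesis .
qed

lemma prob_count_exact:
  fixes L :: "'b pmf" and A :: "'a set"
  assumes fin: "finite A" and disj: "Ca \<inter> Cb = {}"
  shows "measure_pmf.prob (Pi_pmf A dflt (\<lambda>_. L))
           {f. card {t\<in>A. f t \<in> Ca} = m \<and> card {t\<in>A. f t \<in> Cb} = 0}
         = real (card A choose m) * measure_pmf.prob L Ca ^ m * measure_pmf.prob L (- (Ca \<union> Cb)) ^ (card A - m)"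
proof -
  define TT where "TT = {T. T \<subseteq> A \<and> card T = m}"
  define E where "E = (\<lambda>T. Pi A (\<lambda>t. if t \<in> T then Ca else - (Ca \<union> Cb)))"
  have memE: "(f t \<in> Ca \<longleftrightarrow> t \<in> T) \<and> f t \<notin> Cb" if "f \<in> E T" "t \<in> A" for f T t
  proof -
    have "f t \<in> (if t \<in> T then Ca else - (Ca \<union> Cb))" using that unfolding E_def by (rule Pi_mem)
    thus ?thesis using disj by (cases "t \<in> T") auto
  qed
  have finTT: "finite TT" unfolding TT_def using fin by simp
  have ev: "{f. card {t\<in>A. f t \<in> Ca} = m \<and> card {t\<in>A. f t \<in> Cb} = 0} = (\<Union>T\<in>TT. E T)"
  proof (intro equalityI subsetI)
    fix f assume "f \<in> {f. card {t\<in>A. f t \<in> Ca} = m \<and> card {t\<in>A. f t \<in> Cb} = 0}"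
    hence c1: "card {t\<in>A. f t \<in> Ca} = m" and c2: "card {t\<in>A. f t \<in> Cb} = 0" by auto
    have "{t\<in>A. f t \<in> Cb} = {}" using c2 fin by simp
    hence "f \<in> E {t\<in>A. f t \<in> Ca}" unfolding E_def by auto
    moreover have "{t\<in>A. f t \<in> Ca} \<in> TT" unfolding TT_def using c1 by auto
    ultimately show "f \<in> (\<Union>T\<in>TT. E T)" by blast
  next
    fix f assume "f \<in> (\<Union>T\<in>TT. E T)"
    then obtain T where T: "T \<in> TT" "f \<in> E T" by blast
    have e1: "{t\<in>A. f t \<in> Ca} = T" using T memE[OF T(2)] unfolding TT_def by auto
    have e2: "{t\<in>A. f t \<in> Cb} = {}" using memE[OF T(2)] by auto
    show "f \<in> {f. card {t\<in>A. f t \<in> Ca} = m \<and> card {t\<in>A. f t \<in> Cb} = 0}"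
      unfolding mem_Collect_eq e1 e2 using T(1) unfolding TT_def by simp
  qed
  have "measure_pmf.prob (Pi_pmf A dflt (\<lambda>_. L)) (\<Union>T\<in>TT. E T) = (\<Sum>T\<in>TT. measure_pmf.prob (Pi_pmf A dflt (\<lambda>_. L)) (E T))"
  proof (rule measure_pmf.finite_measure_finite_Union[OF finTT])
    show "disjoint_family_on E TT"
    unfolding disjoint_family_on_def proof (intro ballI impI)
      fix T1 T2 assume T: "T1 \<in> TT" "T2 \<in> TT" "T1 \<noteq> T2"
      show "E T1 \<inter> E T2 = {}"
      proof (rule ccontr)
        assume "E T1 \<inter> E T2 \<noteq> {}"
        then obtain f where f: "f \<in> E T1" "f \<in> E T2" by blast
        have "{t\<in>A. f t \<in> Ca} = T1" using T memE[OF f(1)] unfolding TT_def by auto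
        moreover have "{t\<in>A. f t \<in> Ca} = T2" using T memE[OF f(2)] unfolding TT_def by auto
        ultimately show False using T(3) by simp
      qed
    qed
  qed auto
  also have "\<dots> = (\<Sum>T\<in>TT. measure_pmf.prob L Ca ^ m * measure_pmf.prob L (- (Ca \<union> Cb)) ^ (card A - m))"
  proof (rule sum.cong[OF refl])
    fix T assume T: "T \<in> TT"
    have "measure_pmf.prob (Pi_pmf A dflt (\<lambda>_. L)) (E T) =
          (\<Prod>t\<in>A. measure_pmf.prob L (if t \<in> T then Ca else - (Ca \<union> Cb)))"
      unfolding E_def by (rule measure_Pi_pmf_Pi[OF fin])
    also have "\<dots> = (\<Prod>t\<in>A. if t \<in> T then measure_pmf.prob L Ca else measure_pmf.prob L (- (Ca \<union> Cb)))"
      by (intro prod.cong) auto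
    also have "\<dots> = measure_pmf.prob L Ca ^ m * measure_pmf.prob L (- (Ca \<union> Cb)) ^ (card A - m)"
      using T fin unfolding TT_def by (subst prod_if_const) auto
    finally show "measure_pmf.prob (Pi_pmf A dflt (\<lambda>_. L)) (E T) = \<dots>" .
  qed
  also have "\<dots> = real (card TT) * (measure_pmf.prob L Ca ^ m * measure_pmf.prob L (- (Ca \<union> Cb)) ^ (card A - m))"
    by simp
  also have "card TT = card A choose m" unfolding TT_def using n_subsets[OF fin] by simp
  finally show ?thesis using ev by simp
qed

lemma prod_if_gen:
  assumes "finite A" "T \<subseteq> A"
  shows "(\<Prod>t\<in>A. if t \<in> T then a else g t) = (a::real) ^ card T * (\<Prod>t\<in>A - T. g t)"
proof -
  have "(\<Prod>t\<in>A. if t \<in> T then a else g t) = (\<Prod>t\<in>A \<inter> {x. x \<in> T}. a) * (\<Prod>t\<in>A \<inter> - {x. x \<in> T}. g t)"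
    using assms(1) by (rule prod.If_cases)
  also have "A \<inter> {x. x \<in> T} = T" using assms by auto
  also have "A \<inter> - {x. x \<in> T} = A - T" by auto
  finally show ?thesis by simp
qed

lemma prob_count_pair_le:
  fixes L :: "'b pmf" and A :: "'a set"
  assumes fin: "finite A" and d1: "Ca \<inter> Cb = {}" and d2: "Ca' \<inter> Cb' = {}"
    and d3: "(Ca \<union> Cb) \<inter> (Ca' \<union> Cb') = {}"
  shows "measure_pmf.prob (Pi_pmf A dflt (\<lambda>_. L))
           {f. (card {t\<in>A. f t \<in> Ca} = m \<and> card {t\<in>A. f t \<in> Cb} = 0) \<and>
               (card {t\<in>A. f t \<in> Ca'} = m \<and> card {t\<in>A. f t \<in> Cb'} = 0)}
         \<le> real (card A choose m) ^ 2 * measure_pmf.prob L Ca ^ m * measure_pmf.prob L Ca' ^ m *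
            measure_pmf.prob L (- (Ca \<union> Cb \<union> Ca' \<union> Cb')) ^ (card A - 2 * m)"
proof -
  define TT where "TT = {T. T \<subseteq> A \<and> card T = m}"
  define PP where "PP = {P. fst P \<in> TT \<and> snd P \<in> TT \<and> fst P \<inter> snd P = {}}"
  define C where "C = - (Ca \<union> Cb \<union> Ca' \<union> Cb')"
  define E where "E = (\<lambda>P. Pi A (\<lambda>t. if t \<in> fst P then Ca else if t \<in> snd P then Ca' else C))"
  define K where "K = measure_pmf.prob L Ca ^ m * measure_pmf.prob L Ca' ^ m * measure_pmf.prob L C ^ (card A - 2 * m)"
  have finTT: "finite TT" unfolding TT_def using fin by simp
  have PPsub: "PP \<subseteq> TT \<times> TT" unfolding PP_def by auto
  have finPP: "finite PP" using finite_subset[OF PPsub] finTT by auto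
  have ev: "{f. (card {t\<in>A. f t \<in> Ca} = m \<and> card {t\<in>A. f t \<in> Cb} = 0) \<and>
               (card {t\<in>A. f t \<in> Ca'} = m \<and> card {t\<in>A. f t \<in> Cb'} = 0)} \<subseteq> (\<Union>P\<in>PP. E P)"
  proof (intro subsetI)
    fix f assume "f \<in> {f. (card {t\<in>A. f t \<in> Ca} = m \<and> card {t\<in>A. f t \<in> Cb} = 0) \<and>
               (card {t\<in>A. f t \<in> Ca'} = m \<and> card {t\<in>A. f t \<in> Cb'} = 0)}"
    hence c: "card {t\<in>A. f t \<in> Ca} = m" "card {t\<in>A. f t \<in> Cb} = 0"
             "card {t\<in>A. f t \<in> Ca'} = m" "card {t\<in>A. f t \<in> Cb'} = 0" by auto
    have z1: "{t\<in>A. f t \<in> Cb} = {}" using c(2) fin by simp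
    have z2: "{t\<in>A. f t \<in> Cb'} = {}" using c(4) fin by simp
    define P where "P = ({t\<in>A. f t \<in> Ca}, {t\<in>A. f t \<in> Ca'})"
    have "P \<in> PP" unfolding PP_def TT_def P_def using c d3 by auto
    moreover have "f \<in> E P" unfolding E_def P_def C_def using z1 z2 by auto
    ultimately show "f \<in> (\<Union>P\<in>PP. E P)" by blast
  qed
  have "measure_pmf.prob (Pi_pmf A dflt (\<lambda>_. L))
           {f. (card {t\<in>A. f t \<in> Ca} = m \<and> card {t\<in>A. f t \<in> Cb} = 0) \<and>
               (card {t\<in>A. f t \<in> Ca'} = m \<and> card {t\<in>A. f t \<in> Cb'} = 0)}
        \<le> measure_pmf.prob (Pi_pmf A dflt (\<lambda>_. L)) (\<Union>P\<in>PP. E P)"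
    using ev by (intro measure_pmf.finite_measure_mono) auto
  also have "\<dots> \<le> (\<Sum>P\<in>PP. measure_pmf.prob (Pi_pmf A dflt (\<lambda>_. L)) (E P))"
    using finPP by (intro measure_pmf.finite_measure_subadditive_finite) auto
  also have "\<dots> = (\<Sum>P\<in>PP. K)"
  proof (rule sum.cong[OF refl])
    fix P assume P: "P \<in> PP"
    have T1: "fst P \<subseteq> A" "card (fst P) = m" and T2: "snd P \<subseteq> A" "card (snd P) = m"
      and dj: "fst P \<inter> snd P = {}"
      using P unfolding PP_def TT_def by auto
    have T2': "snd P \<subseteq> A - fst P" using T2 dj by auto
    have cd: "card (A - fst P) = card A - m" using T1 fin by (simp add: card_Diff_subset finite_subset)
    have "measure_pmf.prob (Pi_pmf A dflt (\<lambda>_. L)) (E P) =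
          (\<Prod>t\<in>A. measure_pmf.prob L (if t \<in> fst P then Ca else if t \<in> snd P then Ca' else C))"
      unfolding E_def by (rule measure_Pi_pmf_Pi[OF fin])
    also have "\<dots> = (\<Prod>t\<in>A. if t \<in> fst P then measure_pmf.prob L Ca else
                        if t \<in> snd P then measure_pmf.prob L Ca' else measure_pmf.prob L C)"
      by (intro prod.cong) auto
    also have "\<dots> = measure_pmf.prob L Ca ^ m * (\<Prod>t\<in>A - fst P. if t \<in> snd P then measure_pmf.prob L Ca' else measure_pmf.prob L C)"
      using T1 fin by (subst prod_if_gen) auto
    also have "(\<Prod>t\<in>A - fst P. if t \<in> snd P then measure_pmf.prob L Ca' else measure_pmf.prob L C)
               = measure_pmf.prob L Ca' ^ m * measure_pmf.prob L C ^ (card A - 2 * m)"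
    proof -
      have "card A - m - m = card A - 2 * m" by simp
      thus ?thesis using T2' T2(2) fin cd by (subst prod_if_const) auto
    qed
    finally show "measure_pmf.prob (Pi_pmf A dflt (\<lambda>_. L)) (E P) = K" unfolding K_def by simp
  qed
  also have "\<dots> = real (card PP) * K" by simp
  also have "\<dots> \<le> real (card (TT \<times> TT)) * K"
  proof (rule mult_right_mono)
    have "card PP \<le> card (TT \<times> TT)" using finTT PPsub by (intro card_mono) auto
    thus "real (card PP) \<le> real (card (TT \<times> TT))" by (simp only: of_nat_le_iff)
  qed (simp add: K_def)
  also have "card (TT \<times> TT) = (card A choose m) ^ 2"
    unfolding card_cartesian_product TT_def using n_subsets[OF fin] by (simp add: power2_eq_square)
  finally show ?thesis unfolding K_def C_def by (simp add: mult.assoc)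
qed

definition sgl :: "nat set \<Rightarrow> nat \<Rightarrow> (nat \<Rightarrow> bool) \<Rightarrow> bool" where
  "sgl S i x \<longleftrightarrow> x i \<and> (\<forall>j\<in>S - {i}. \<not> x j)"

definition rowpmf :: "nat \<Rightarrow> nat set \<Rightarrow> real \<Rightarrow> real \<Rightarrow> ((nat \<Rightarrow> bool) \<times> bool) pmf" where
  "rowpmf p S q \<rho> = do {x \<leftarrow> Pi_pmf {1..p} False (\<lambda>_. bernoulli_pmf q);
                        y \<leftarrow> (if \<exists>j\<in>S. x j then bernoulli_pmf (1 - \<rho>) else return_pmf False);
                        return_pmf (x, y)}"

lemma prob_sgl:
  assumes S: "S \<subseteq> {1..p}" and i: "i \<in> S" and q: "0 \<le> q" "q \<le> 1"
  shows "measure_pmf.prob (Pi_pmf {1..p} False (\<lambda>_. bernoulli_pmf q)) {x. sgl S i x}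
         = q * (1 - q) ^ (card S - 1)"
proof -
  define B where "B = (\<lambda>j. if j = i then {True} else if j \<in> S then {False} else (UNIV :: bool set))"
  have eq: "{x. sgl S i x} = Pi {1..p} B"
    using S i unfolding B_def sgl_def Pi_def by auto
  have "measure_pmf.prob (Pi_pmf {1..p} False (\<lambda>_. bernoulli_pmf q)) (Pi {1..p} B)
        = (\<Prod>j\<in>{1..p}. measure_pmf.prob (bernoulli_pmf q) (B j))"
    by (rule measure_Pi_pmf_Pi) simp
  also have "\<dots> = (\<Prod>j\<in>{1..p}. if j \<in> {i} then q else if j \<in> S - {i} then 1 - q else 1)"
    using q by (intro prod.cong refl) (auto simp: B_def measure_pmf_single)
  also have "\<dots> = q ^ card {i} * (\<Prod>j\<in>{1..p} - {i}. if j \<in> S - {i} then 1 - q else 1)"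
    using S i by (intro prod_if_gen) auto
  also have "(\<Prod>j\<in>{1..p} - {i}. if j \<in> S - {i} then 1 - q else 1) = (1 - q) ^ card (S - {i}) * 1 ^ (card ({1..p} - {i}) - card (S - {i}))"
    using S i by (intro prod_if_const) auto
  finally show ?thesis using eq i S by (simp add: card_Diff_singleton finite_subset)
qed

lemma map_fst_rowpmf: "map_pmf fst (rowpmf p S q \<rho>) = Pi_pmf {1..p} False (\<lambda>_. bernoulli_pmf q)"
  unfolding rowpmf_def map_bind_pmf
  by (simp add: map_pmf_def[symmetric] pmf.map_comp o_def map_pmf_const bind_return_pmf')

lemma prob_rowpmf_fst:
  "measure_pmf.prob (rowpmf p S q \<rho>) (fst -` B) = measure_pmf.prob (Pi_pmf {1..p} False (\<lambda>_. bernoulli_pmf q)) B"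
  by (metis map_fst_rowpmf measure_map_pmf)

lemma prob_rowpmf_neg:
  assumes S: "S \<subseteq> {1..p}" and i: "i \<in> S" and q: "0 \<le> q" "q \<le> 1" and r: "0 \<le> \<rho>" "\<rho> \<le> 1"
  shows "measure_pmf.prob (rowpmf p S q \<rho>) {(x, y). sgl S i x \<and> \<not> y} = \<rho> * (q * (1 - q) ^ (card S - 1))"
proof -
  let ?X = "Pi_pmf {1..p} False (\<lambda>_. bernoulli_pmf q)"
  have "measure_pmf.prob (rowpmf p S q \<rho>) {(x, y). sgl S i x \<and> \<not> y}
        = measure_pmf.expectation ?X (\<lambda>x. measure_pmf.prob (map_pmf (Pair x) (if \<exists>j\<in>S. x j then bernoulli_pmf (1 - \<rho>) else return_pmf False)) {(x, y). sgl S i x \<and> \<not> y})"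
    unfolding rowpmf_def by (subst prob_bind_pmf) (simp add: map_pmf_def)
  also have "\<dots> = measure_pmf.expectation ?X (\<lambda>x. \<rho> * indicator {x. sgl S i x} x)"
  proof (intro Bochner_Integration.integral_cong refl)
    fix x
    show "measure_pmf.prob (map_pmf (Pair x) (if \<exists>j\<in>S. x j then bernoulli_pmf (1 - \<rho>) else return_pmf False)) {(x, y). sgl S i x \<and> \<not> y}
          = \<rho> * indicator {x. sgl S i x} x"
    proof (cases "sgl S i x")
      case True
      hence "\<exists>j\<in>S. x j" using i unfolding sgl_def by auto
      moreover have "Pair x -` {(x, y). sgl S i x \<and> \<not> y} = {False}" using True by auto
      ultimately show ?thesis using True r by (simp add: measure_pmf_single)
    next
      case False
      hence "Pair x -` {(x, y). sgl S i x \<and> \<not> y} = {}" by auto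
      thus ?thesis using False by simp
    qed
  qed
  also have "\<dots> = \<rho> * measure_pmf.prob ?X {x. sgl S i x}" by simp
  also have "\<dots> = \<rho> * (q * (1 - q) ^ (card S - 1))" using prob_sgl[OF S i q] by simp
  finally show ?thesis .
qed

lemma prob_rowpmf_compl1:
  assumes S: "S \<subseteq> {1..p}" and i: "i \<in> S" and q: "0 \<le> q" "q \<le> 1"
  shows "measure_pmf.prob (rowpmf p S q \<rho>) (- ({(x, y). sgl S i x \<and> \<not> y} \<union> {(x, y). sgl S i x \<and> y}))
        = 1 - q * (1 - q) ^ (card S - 1)"
proof -
  have "- ({(x, y). sgl S i x \<and> \<not> y} \<union> {(x, y). sgl S i x \<and> y}) = fst -` (- {x. sgl S i x})" by auto
  hence "measure_pmf.prob (rowpmf p S q \<rho>) (- ({(x, y). sgl S i x \<and> \<not> y} \<union> {(x, y). sgl S i x \<and> y}))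
     = measure_pmf.prob (Pi_pmf {1..p} False (\<lambda>_. bernoulli_pmf q)) (- {x. sgl S i x})"
    by (simp add: prob_rowpmf_fst)
  also have "\<dots> = 1 - measure_pmf.prob (Pi_pmf {1..p} False (\<lambda>_. bernoulli_pmf q)) {x. sgl S i x}"
    using measure_pmf.prob_compl[of "{x. sgl S i x}" "Pi_pmf {1..p} False (\<lambda>_. bernoulli_pmf q)"]
    by (simp add: Compl_eq_Diff_UNIV)
  finally show ?thesis using prob_sgl[OF S i q] by simp
qed

lemma prob_rowpmf_compl2:
  assumes S: "S \<subseteq> {1..p}" and i: "i \<in> S" and j: "j \<in> S" and ij: "i \<noteq> j" and q: "0 \<le> q" "q \<le> 1"
  shows "measure_pmf.prob (rowpmf p S q \<rho>) (- ({(x, y). sgl S i x \<and> \<not> y} \<union> {(x, y). sgl S i x \<and> y}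
             \<union> {(x, y). sgl S j x \<and> \<not> y} \<union> {(x, y). sgl S j x \<and> y}))
        = 1 - 2 * (q * (1 - q) ^ (card S - 1))"
proof -
  let ?X = "Pi_pmf {1..p} False (\<lambda>_. bernoulli_pmf q)"
  have "- ({(x, y). sgl S i x \<and> \<not> y} \<union> {(x, y). sgl S i x \<and> y}
             \<union> {(x, y). sgl S j x \<and> \<not> y} \<union> {(x, y). sgl S j x \<and> y}) = fst -` (- ({x. sgl S i x} \<union> {x. sgl S j x}))" by auto
  note E = this
  have "measure_pmf.prob (rowpmf p S q \<rho>) (- ({(x, y). sgl S i x \<and> \<not> y} \<union> {(x, y). sgl S i x \<and> y}
             \<union> {(x, y). sgl S j x \<and> \<not> y} \<union> {(x, y). sgl S j x \<and> y}))
     = measure_pmf.prob ?X (- ({x. sgl S i x} \<union> {x. sgl S j x}))"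
    unfolding E by (rule prob_rowpmf_fst)
  also have "\<dots> = 1 - measure_pmf.prob ?X ({x. sgl S i x} \<union> {x. sgl S j x})"
    using measure_pmf.prob_compl[of "{x. sgl S i x} \<union> {x. sgl S j x}" ?X]
    by (simp add: Compl_eq_Diff_UNIV)
  also have "measure_pmf.prob ?X ({x. sgl S i x} \<union> {x. sgl S j x}) =
             measure_pmf.prob ?X {x. sgl S i x} + measure_pmf.prob ?X {x. sgl S j x}"
  proof (rule measure_pmf.finite_measure_Union)
    show "{x. sgl S i x} \<inter> {x. sgl S j x} = {}" using i j ij unfolding sgl_def by auto
  qed auto
  finally show ?thesis using prob_sgl[OF S i q] prob_sgl[OF S j q] by simp
qed

lemma integrable_pmf_bounded:
  fixes f :: "'a \<Rightarrow> real"
  assumes "\<And>x. \<bar>f x\<bar> \<le> B"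
  shows "integrable (measure_pmf M) f"
  by (rule measure_pmf.integrable_const_bound[where B=B]) (use assms in auto)

lemma second_moment:
  fixes M :: "'a pmf" and G :: "'i \<Rightarrow> 'a set" and I :: "'i set"
  assumes fin: "finite I"
  shows "measure_pmf.prob M {x. \<forall>i\<in>I. x \<notin> G i} * (\<Sum>i\<in>I. measure_pmf.prob M (G i))^2
         \<le> (\<Sum>i\<in>I. \<Sum>j\<in>I. measure_pmf.prob M (G i \<inter> G j)) - (\<Sum>i\<in>I. measure_pmf.prob M (G i))^2"
proof -
  define Z where "Z = (\<lambda>x. \<Sum>i\<in>I. indicator (G i) x :: real)"
  define \<mu> where "\<mu> = (\<Sum>i\<in>I. measure_pmf.prob M (G i))"
  define E0 where "E0 = {x. \<forall>i\<in>I. x \<notin> G i}"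
  have Zb: "\<bar>Z x\<bar> \<le> real (card I)" for x
  proof -
    have "Z x \<ge> 0" unfolding Z_def by (intro sum_nonneg) auto
    moreover have "Z x \<le> (\<Sum>i\<in>I. 1)" unfolding Z_def by (intro sum_mono) (auto simp: indicator_def)
    ultimately show ?thesis by simp
  qed
  have intZ: "integrable (measure_pmf M) Z" by (rule integrable_pmf_bounded[OF Zb])
  have EZ: "measure_pmf.expectation M Z = \<mu>"
    unfolding Z_def \<mu>_def by (subst Bochner_Integration.integral_sum) (auto intro!: integrable_pmf_bounded[where B=1] simp: indicator_def)
  have Z2: "(Z x)^2 = (\<Sum>i\<in>I. \<Sum>j\<in>I. indicator (G i \<inter> G j) x)" for x
    unfolding Z_def power2_eq_square sum_product by (intro sum.cong refl) (auto simp: indicator_def)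
  have EZ2: "measure_pmf.expectation M (\<lambda>x. (Z x)^2) = (\<Sum>i\<in>I. \<Sum>j\<in>I. measure_pmf.prob M (G i \<inter> G j))"
  proof -
    have ii: "integrable (measure_pmf M) (\<lambda>x. indicator (G i \<inter> G j) x :: real)" for i j
      by (rule integrable_pmf_bounded[where B=1]) (auto simp: indicator_def)
    have "measure_pmf.expectation M (\<lambda>x. \<Sum>i\<in>I. \<Sum>j\<in>I. indicator (G i \<inter> G j) x :: real)
          = (\<Sum>i\<in>I. measure_pmf.expectation M (\<lambda>x. \<Sum>j\<in>I. indicator (G i \<inter> G j) x))"
      by (intro Bochner_Integration.integral_sum Bochner_Integration.integrable_sum) (simp add: ii)
    also have "\<dots> = (\<Sum>i\<in>I. \<Sum>j\<in>I. measure_pmf.expectation M (\<lambda>x. indicator (G i \<inter> G j) x))"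
      by (intro sum.cong refl Bochner_Integration.integral_sum ii)
    finally show ?thesis unfolding Z2 by simp
  qed
  have pt: "\<mu>^2 * indicator E0 x \<le> (Z x - \<mu>)^2" for x
  proof (cases "x \<in> E0")
    case True
    hence "Z x = 0" unfolding Z_def E0_def by (auto intro!: sum.neutral)
    thus ?thesis using True by simp
  qed simp
  have "\<mu>^2 * measure_pmf.prob M E0 = measure_pmf.expectation M (\<lambda>x. \<mu>^2 * indicator E0 x)" by simp
  also have "\<dots> \<le> measure_pmf.expectation M (\<lambda>x. (Z x - \<mu>)^2)"
  proof (intro integral_mono pt)
    show "integrable (measure_pmf M) (\<lambda>x. \<mu>^2 * indicator E0 x)"
      by (rule integrable_pmf_bounded[where B="\<mu>^2"]) (auto simp: indicator_def)
    show "integrable (measure_pmf M) (\<lambda>x. (Z x - \<mu>)^2)"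
    proof (rule integrable_pmf_bounded[where B="(real (card I) + \<bar>\<mu>\<bar>)^2"])
      fix x
      have "\<bar>Z x - \<mu>\<bar> \<le> \<bar>Z x\<bar> + \<bar>\<mu>\<bar>" by (rule abs_triangle_ineq4)
      hence "\<bar>Z x - \<mu>\<bar> \<le> real (card I) + \<bar>\<mu>\<bar>" using Zb[of x] by linarith
      hence "\<bar>Z x - \<mu>\<bar>^2 \<le> (real (card I) + \<bar>\<mu>\<bar>)^2" by (intro power_mono) auto
      thus "\<bar>(Z x - \<mu>)^2\<bar> \<le> (real (card I) + \<bar>\<mu>\<bar>)^2" by simp
    qed
  qed
  also have "(\<lambda>x. (Z x - \<mu>)^2) = (\<lambda>x. (Z x)^2 - 2 * \<mu> * Z x + \<mu>^2)" by (auto simp: power2_eq_square algebra_simps)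
  also have "measure_pmf.expectation M \<dots> = measure_pmf.expectation M (\<lambda>x. (Z x)^2) - 2 * \<mu> * measure_pmf.expectation M Z + \<mu>^2"
  proof -
    have i2: "integrable (measure_pmf M) (\<lambda>x. (Z x)^2)"
    proof (rule integrable_pmf_bounded[where B="(real (card I))^2"])
      fix x
      have "\<bar>Z x\<bar>^2 \<le> (real (card I))^2" using Zb[of x] by (intro power_mono) auto
      thus "\<bar>(Z x)^2\<bar> \<le> (real (card I))^2" by simp
    qed
    show ?thesis using i2 intZ by (simp add: Bochner_Integration.integral_diff Bochner_Integration.integral_add)
  qed
  finally show ?thesis unfolding E0_def[symmetric] \<mu>_def[symmetric] EZ EZ2 by (simp add: power2_eq_square mult.commute)
qed

definition Ca :: "nat set \<Rightarrow> nat \<Rightarrow> ((nat \<Rightarrow> bool) \<times> bool) set" where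
  "Ca S i = {(x, y). sgl S i x \<and> \<not> y}"
definition Cb :: "nat set \<Rightarrow> nat \<Rightarrow> ((nat \<Rightarrow> bool) \<times> bool) set" where
  "Cb S i = {(x, y). sgl S i x \<and> y}"

definition JP :: "nat \<Rightarrow> nat \<Rightarrow> nat set \<Rightarrow> real \<Rightarrow> real \<Rightarrow> ((nat \<times> nat \<Rightarrow> bool) \<times> (nat \<Rightarrow> bool)) pmf" where
  "JP p n S q \<rho> = do {X \<leftarrow> Pi_pmf ({0..<n} \<times> {1..p}) False (\<lambda>_. bernoulli_pmf q);
                       Y \<leftarrow> Pi_pmf {0..<n} False (\<lambda>t. if \<exists>j\<in>S. X (t, j) then bernoulli_pmf (1 - \<rho>) else return_pmf False);
                       return_pmf (X, Y)}"

lemma JP_row: "map_pmf (\<lambda>(X,Y) t. ((\<lambda>j. X(t,j)), Y t)) (JP p n S q \<rho>) =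
   Pi_pmf {0..<n} ((\<lambda>_. False), False) (\<lambda>_. rowpmf p S q \<rho>)"
  unfolding JP_def rowpmf_def
  using row_law[of "{0..<n}" "{1..p}" "bernoulli_pmf q" "\<lambda>x. if \<exists>j\<in>S. x j then bernoulli_pmf (1 - \<rho>) else return_pmf False"]
  by simp

lemma perS:
  fixes S :: "nat set" and k n m p :: nat and q \<rho> r P1 :: real
  assumes S: "S \<subseteq> {1..p}" "card S = k" "k \<ge> 1" and q: "0 \<le> q" "q \<le> 1"
    and \<rho>: "0 < \<rho>" "\<rho> \<le> 1" and r: "r = q * (1 - q) ^ (k - 1)" "0 < r" "r \<le> 1/2"
    and nm: "2 * m \<le> n"
    and P1: "P1 = real (n choose m) * (r * \<rho>) ^ m * (1 - r) ^ (n - m)" "P1 > 0"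
  shows "measure_pmf.prob (JP p n S q \<rho>) {(X, Y). \<exists>i\<in>S. Mplus n S X Y i = 0 \<and> Mminus n S X Y i = m}
         \<ge> 1 - (1 / (real k * P1) + 1 / (1 - r) ^ (2 * m) - 1)"
proof -
  define PW where "PW = Pi_pmf {0..<n} ((\<lambda>_. False), False) (\<lambda>_. rowpmf p S q \<rho>)"
  define G where "G = (\<lambda>i. {f. card {t\<in>{0..<n}. f t \<in> Ca S i} = m \<and> card {t\<in>{0..<n}. f t \<in> Cb S i} = 0})"
  have finS: "finite S" using S(1) finite_subset by blast
  have sgl_disj: "Ca S i \<inter> Cb S i = {}" for i unfolding Ca_def Cb_def by auto
  have sgl_disj2: "(Ca S i \<union> Cb S i) \<inter> (Ca S j \<union> Cb S j) = {}" if "i \<in> S" "j \<in> S" "i \<noteq> j" for i j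
    using that unfolding Ca_def Cb_def sgl_def by auto
  have ev: "{(X, Y). \<exists>i\<in>S. Mplus n S X Y i = 0 \<and> Mminus n S X Y i = m}
            = (\<lambda>(X,Y) t. ((\<lambda>j. X(t,j)), Y t)) -` {f. \<exists>i\<in>S. f \<in> G i}"
  proof -
    have mp: "Mplus n S X Y i = card {t\<in>{0..<n}. ((\<lambda>j. X(t,j)), Y t) \<in> Cb S i}" for X Y i
      unfolding Mplus_def Cb_def sgl_def by (rule arg_cong[where f=card]) auto
    have mm: "Mminus n S X Y i = card {t\<in>{0..<n}. ((\<lambda>j. X(t,j)), Y t) \<in> Ca S i}" for X Y i
      unfolding Mminus_def Ca_def sgl_def by (rule arg_cong[where f=card]) auto
    show ?thesis unfolding mp mm G_def by auto
  qed
  have "measure_pmf.prob (JP p n S q \<rho>) {(X, Y). \<exists>i\<in>S. Mplus n S X Y i = 0 \<and> Mminus n S X Y i = m}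
        = measure_pmf.prob PW {f. \<exists>i\<in>S. f \<in> G i}"
    unfolding ev PW_def JP_row[symmetric] by simp
  also have "\<dots> = 1 - measure_pmf.prob PW {f. \<forall>i\<in>S. f \<notin> G i}"
  proof -
    have "{f. \<forall>i\<in>S. f \<notin> G i} = UNIV - {f. \<exists>i\<in>S. f \<in> G i}" by auto
    thus ?thesis using measure_pmf.prob_compl[of "{f. \<exists>i\<in>S. f \<in> G i}" PW] by simp
  qed
  finally have main: "measure_pmf.prob (JP p n S q \<rho>) {(X, Y). \<exists>i\<in>S. Mplus n S X Y i = 0 \<and> Mminus n S X Y i = m}
     = 1 - measure_pmf.prob PW {f. \<forall>i\<in>S. f \<notin> G i}" .
  define P0 where "P0 = measure_pmf.prob PW {f. \<forall>i\<in>S. f \<notin> G i}"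
  define U2 where "U2 = real (n choose m) ^ 2 * (r * \<rho>) ^ m * (r * \<rho>) ^ m * (1 - 2 * r) ^ (n - 2 * m)"
  have PG: "measure_pmf.prob PW (G i) = P1" if i: "i \<in> S" for i
  proof -
    have "measure_pmf.prob PW (G i) = real (card {0..<n} choose m) * measure_pmf.prob (rowpmf p S q \<rho>) (Ca S i) ^ m *
           measure_pmf.prob (rowpmf p S q \<rho>) (- (Ca S i \<union> Cb S i)) ^ (card {0..<n} - m)"
      unfolding PW_def G_def by (rule prob_count_exact[OF _ sgl_disj]) simp
    also have "measure_pmf.prob (rowpmf p S q \<rho>) (Ca S i) = r * \<rho>"
      unfolding Ca_def using prob_rowpmf_neg[OF S(1) i q, of \<rho>] \<rho> r S by simp
    also have "measure_pmf.prob (rowpmf p S q \<rho>) (- (Ca S i \<union> Cb S i)) = 1 - r"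
      unfolding Ca_def Cb_def using prob_rowpmf_compl1[OF S(1) i q, of \<rho>] r S by simp
    finally show ?thesis using P1 by simp
  qed
  have PGG: "measure_pmf.prob PW (G i \<inter> G j) \<le> U2" if i: "i \<in> S" and j: "j \<in> S" and ij: "i \<noteq> j" for i j
  proof -
    have "G i \<inter> G j = {f. (card {t\<in>{0..<n}. f t \<in> Ca S i} = m \<and> card {t\<in>{0..<n}. f t \<in> Cb S i} = 0) \<and>
               (card {t\<in>{0..<n}. f t \<in> Ca S j} = m \<and> card {t\<in>{0..<n}. f t \<in> Cb S j} = 0)}"
      unfolding G_def by auto
    note L = prob_count_pair_le[OF finite_atLeastLessThan[of 0 n] sgl_disj sgl_disj sgl_disj2[OF i j ij],
         where dflt="(\<lambda>_. False, False)" and L="rowpmf p S q \<rho>" and m=m]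
    have "measure_pmf.prob PW (G i \<inter> G j) \<le> real (card {0..<n} choose m) ^ 2 * measure_pmf.prob (rowpmf p S q \<rho>) (Ca S i) ^ m
           * measure_pmf.prob (rowpmf p S q \<rho>) (Ca S j) ^ m *
            measure_pmf.prob (rowpmf p S q \<rho>) (- (Ca S i \<union> Cb S i \<union> Ca S j \<union> Cb S j)) ^ (card {0..<n} - 2 * m)"
      unfolding PW_def \<open>G i \<inter> G j = _\<close> using L by (simp only: card_atLeastLessThan diff_zero)
    also have "measure_pmf.prob (rowpmf p S q \<rho>) (Ca S i) = r * \<rho>"
      unfolding Ca_def using prob_rowpmf_neg[OF S(1) i q, of \<rho>] \<rho> r S by simp
    also have "measure_pmf.prob (rowpmf p S q \<rho>) (Ca S j) = r * \<rho>"
      unfolding Ca_def using prob_rowpmf_neg[OF S(1) j q, of \<rho>] \<rho> r S by simp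
    also have "measure_pmf.prob (rowpmf p S q \<rho>) (- (Ca S i \<union> Cb S i \<union> Ca S j \<union> Cb S j)) = 1 - 2 * r"
      unfolding Ca_def Cb_def using prob_rowpmf_compl2[OF S(1) i j ij q, of \<rho>] r S by simp
    finally show ?thesis unfolding U2_def by simp
  qed
  have U2le: "U2 * (1 - r) ^ (2 * m) \<le> P1 ^ 2"
  proof -
    have "(1 - 2 * r) ^ (n - 2 * m) \<le> ((1 - r) ^ 2) ^ (n - 2 * m)"
      using r(2,3) by (intro power_mono) (auto simp: power2_eq_square algebra_simps)
    hence "(1 - 2 * r) ^ (n - 2 * m) * (1 - r) ^ (2 * m) \<le> (1 - r) ^ (2 * (n - 2 * m) + 2 * m)"
      using r(2,3) by (simp add: power_add power_mult mult_right_mono)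
    also have "2 * (n - 2 * m) + 2 * m = 2 * (n - m)" using nm by simp
    finally have *: "(1 - 2 * r) ^ (n - 2 * m) * (1 - r) ^ (2 * m) \<le> ((1 - r) ^ (n - m)) ^ 2"
      by (simp add: power_mult mult.commute)
    have "U2 * (1 - r) ^ (2 * m) = (real (n choose m) * (r * \<rho>) ^ m) ^ 2 * ((1 - 2 * r) ^ (n - 2 * m) * (1 - r) ^ (2 * m))"
      unfolding U2_def by (simp add: power2_eq_square algebra_simps)
    also have "\<dots> \<le> (real (n choose m) * (r * \<rho>) ^ m) ^ 2 * ((1 - r) ^ (n - m)) ^ 2"
      by (intro mult_left_mono *) simp
    also have "\<dots> = P1 ^ 2" unfolding P1(1) by (simp add: power_mult_distrib)
    finally show ?thesis .
  qed
  have U2nn: "U2 \<ge> 0" unfolding U2_def using r(2,3) \<rho> by (intro mult_nonneg_nonneg) auto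
  have sumG: "(\<Sum>i\<in>S. measure_pmf.prob PW (G i)) = real k * P1" using PG S by simp
  have sumGG: "(\<Sum>i\<in>S. \<Sum>j\<in>S. measure_pmf.prob PW (G i \<inter> G j)) \<le> real k * P1 + real k ^ 2 * U2"
  proof -
    have "(\<Sum>i\<in>S. \<Sum>j\<in>S. measure_pmf.prob PW (G i \<inter> G j)) \<le> (\<Sum>i\<in>S. P1 + real k * U2)"
    proof (rule sum_mono)
      fix i assume i: "i \<in> S"
      have "(\<Sum>j\<in>S. measure_pmf.prob PW (G i \<inter> G j)) = measure_pmf.prob PW (G i \<inter> G i) + (\<Sum>j\<in>S - {i}. measure_pmf.prob PW (G i \<inter> G j))"
        using i finS by (simp add: sum.remove)
      also have "\<dots> \<le> P1 + (\<Sum>j\<in>S - {i}. U2)"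
        using PG[OF i] PGG[OF i] by (intro add_mono sum_mono) auto
      also have "(\<Sum>j\<in>S - {i}. U2) \<le> real k * U2"
        using U2nn S i finS by (simp add: card_Diff_singleton mult_right_mono)
      finally show "(\<Sum>j\<in>S. measure_pmf.prob PW (G i \<inter> G j)) \<le> P1 + real k * U2" by simp
    qed
    also have "\<dots> = real k * P1 + real k ^ 2 * U2" using S by (simp add: power2_eq_square algebra_simps)
    finally show ?thesis .
  qed
  have sm: "P0 * (real k * P1) ^ 2 \<le> real k * P1 + real k ^ 2 * U2 - (real k * P1) ^ 2"
    using second_moment[OF finS, of PW G] sumG sumGG unfolding P0_def by simp
  have kP: "real k * P1 > 0" using S P1 by simp
  have rpos: "(1 - r) ^ (2 * m) > 0" using r(2,3) by simp
  have "P0 \<le> (real k * P1 + real k ^ 2 * U2 - (real k * P1) ^ 2) / (real k * P1) ^ 2"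
  proof -
    have "(real k * P1)^2 > 0" using kP by (simp only: zero_less_power)
    thus ?thesis using sm by (simp only: pos_le_divide_eq)
  qed
  also have "\<dots> = 1 / (real k * P1) + U2 / P1 ^ 2 - 1"
  proof -
    have "real k \<noteq> 0" "P1 \<noteq> 0" using S(3) P1(2) by auto
    thus ?thesis by (simp add: field_simps power2_eq_square)
  qed
  also have "U2 / P1 ^ 2 \<le> 1 / (1 - r) ^ (2 * m)"
    using U2le rpos P1(2) by (simp add: field_simps)
  finally have "P0 \<le> 1 / (real k * P1) + 1 / (1 - r) ^ (2 * m) - 1" by simp
  thus ?thesis using main unfolding P0_def by simp
qed

lemma e_le_pow: "m \<ge> 1 \<Longrightarrow> exp 1 * real m ^ (m+1) \<le> real (m+1) ^ (m+1)"
proof -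
  assume m: "m \<ge> 1"
  define y where "y = real (m+1) / real m"
  have y: "y > 0" using m unfolding y_def by simp
  have "ln (1 / y) \<le> 1 / y - 1" using y by (intro ln_le_minus_one) simp
  hence "ln y \<ge> 1 - 1 / y" using y by (simp add: ln_div)
  also have "1 - 1 / y = 1 / real (m+1)" using m unfolding y_def by (simp add: field_simps)
  finally have "real (m+1) * ln y \<ge> 1" using m by (simp add: field_simps)
  hence "exp 1 \<le> exp (real (m+1) * ln y)" by simp
  also have "exp (real (m+1) * ln y) = y ^ (m+1)" using y by (subst exp_of_nat_mult) simp
  also have "y ^ (m+1) = real (m+1) ^ (m+1) / real m ^ (m+1)" unfolding y_def by (simp add: power_divide)
  finally show ?thesis using m by (simp add: field_simps)
qed

lemma fact_upper: "m \<ge> 1 \<Longrightarrow> (fact m :: real) \<le> real m ^ (m+1) / exp (real m - 1)"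
proof (induction m rule: nat_induct_at_least)
  case base
  then show ?case by simp
next
  case (Suc m)
  have "(fact (Suc m) :: real) = real (m+1) * fact m" by simp
  also have "\<dots> \<le> real (m+1) * (real m ^ (m+1) / exp (real m - 1))"
    using Suc by (intro mult_left_mono) auto
  also have "\<dots> = real (m+1) * (exp 1 * real m ^ (m+1)) / exp (real m)"
    by (simp add: exp_diff field_simps)
  also have "\<dots> \<le> real (m+1) * real (m+1) ^ (m+1) / exp (real m)"
    using e_le_pow[OF Suc.hyps] by (intro divide_right_mono mult_left_mono) auto
  also have "\<dots> = real (Suc m) ^ (Suc m + 1) / exp (real (Suc m) - 1)"
    by simp
  finally show ?case .
qed

lemma fact_ratio_lower: "k \<le> n \<Longrightarrow> fact (n - k) * (n - k) ^ k \<le> (fact n :: nat)"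
proof (induction k)
  case 0
  then show ?case by simp
next
  case (Suc k)
  have "fact (n - Suc k) * (n - Suc k) ^ Suc k = (fact (n - Suc k) * (n - Suc k)) * (n - Suc k) ^ k"
    by (simp add: algebra_simps)
  also have "\<dots> \<le> (fact (n - Suc k) * (n - k)) * (n - k) ^ k"
    by (intro mult_mono power_mono) auto
  also have "fact (n - Suc k) * (n - k) = fact (n - k)"
  proof -
    have "n - k = Suc (n - Suc k)" using Suc.prems by simp
    thus ?thesis by simp
  qed
  also have "fact (n - k) * (n - k) ^ k \<le> fact n" using Suc by simp
  finally show ?case .
qed

lemma choose_lower: "m \<le> n \<Longrightarrow> real (n choose m) \<ge> real (n - m) ^ m / fact m"
proof -
  assume mn: "m \<le> n"
  have "fact m * fact (n - m) * real (n choose m) = fact n" using binomial_fact_lemma[OF mn]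
    by (metis of_nat_fact of_nat_mult)
  moreover have "real (fact (n - m) * (n - m) ^ m) \<le> real (fact n)"
    using fact_ratio_lower[OF mn] by (simp only: of_nat_le_iff)
  ultimately have "fact (n - m) * real (n - m) ^ m \<le> fact (n - m) * (fact m * real (n choose m))"
    by (simp add: algebra_simps)
  hence "real (n - m) ^ m \<le> fact m * real (n choose m)"
    by (rule mult_left_le_imp_le) simp
  thus ?thesis by (simp add: divide_le_eq mult.commute)
qed

lemma kP1_lower:
  fixes k n m :: nat and r \<rho> :: real
  assumes m: "1 \<le> m" "m < n" and r: "0 < r" "r \<le> 1/2" and \<rho>: "0 < \<rho>" and k: "k \<ge> 1"
  shows "real k * (real (n choose m) * (r * \<rho>) ^ m * (1 - r) ^ (n - m)) \<ge>
         exp (ln (real k) + real m * (ln ((real n - real m) * r * \<rho> / real m) + 1) - 1 - ln (real m)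
              - real n * r - 2 * real n * r^2)"
proof -
  define z where "z = (real n - real m) * r * \<rho> / real m"
  have mpos: "real m > 0" using m by simp
  have nm: "real (n - m) = real n - real m" using m by simp
  have zpos: "z > 0" unfolding z_def using m r \<rho> by (simp add: of_nat_less_iff)
  have e1: "exp (real m * ln z) = z ^ m" using zpos by (subst exp_of_nat_mult) simp
  have "exp (ln (real k) + real m * (ln z + 1) - 1 - ln (real m) - real n * r - 2 * real n * r^2)
        = exp (ln (real k)) * exp (real m * ln z) * exp (real m - 1) / exp (ln (real m)) * exp (- (real n * r + 2 * real n * r^2))"
    by (simp add: exp_add[symmetric] exp_diff[symmetric] algebra_simps)
  also have "\<dots> = real k * z ^ m * exp (real m - 1) / real m * exp (- (real n * r + 2 * real n * r^2))"
    using k mpos by (simp add: e1)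
  also have "\<dots> = real k * ((real (n - m) ^ m * exp (real m - 1) / real m ^ (m + 1)) * (r * \<rho>) ^ m * exp (- (real n * r + 2 * real n * r^2)))"
  proof -
    have "z ^ m = real (n - m) ^ m * (r * \<rho>) ^ m / real m ^ m"
      unfolding z_def nm[symmetric] by (simp only: power_divide power_mult_distrib mult.assoc)
    thus ?thesis using mpos by (simp add: field_simps)
  qed
  also have "\<dots> \<le> real k * (real (n choose m) * (r * \<rho>) ^ m * (1 - r) ^ (n - m))"
  proof (intro mult_left_mono mult_mono)
    have "real (n - m) ^ m * exp (real m - 1) / real m ^ (m + 1) = real (n - m) ^ m / (real m ^ (m + 1) / exp (real m - 1))"
      by simp
    also have "\<dots> \<le> real (n - m) ^ m / fact m"
    proof (rule divide_left_mono[OF fact_upper[OF m(1)]])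
      show "0 < real m ^ (m + 1) / exp (real m - 1) * fact m" using mpos by (intro mult_pos_pos divide_pos_pos) auto
    qed simp
    also have "\<dots> \<le> real (n choose m)" using choose_lower m by simp
    finally show "real (n - m) ^ m * exp (real m - 1) / real m ^ (m + 1) \<le> real (n choose m)" .
    have "exp (- (real n * r + 2 * real n * r^2)) = exp (real n * (- r - 2 * r^2))" by (simp add: algebra_simps)
    also have "\<dots> \<le> exp (real n * ln (1 - r))"
      using ln_one_minus_pos_lower_bound[of r] r by (intro exp_le_cancel_iff[THEN iffD2] mult_left_mono) auto
    also have "\<dots> = (1 - r) ^ n" using r by (subst exp_of_nat_mult) simp
    also have "\<dots> \<le> (1 - r) ^ (n - m)" using r by (intro power_decreasing) auto
    finally show "exp (- (real n * r + 2 * real n * r^2)) \<le> (1 - r) ^ (n - m)" .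
  qed (use r \<rho> in auto)
  finally show ?thesis unfolding z_def .
qed

lemma gt_lower:
  fixes d c :: real
  assumes kp: "k \<le> p"
    and H: "\<And>S. S \<subseteq> {1..p} \<Longrightarrow> card S = k \<Longrightarrow>
        measure_pmf.prob (JP p n S (\<nu> / real k) \<rho>) {(X, Y). \<exists>i\<in>S. Mplus n S X Y i = 0 \<and> Mminus n S X Y i = m} \<ge> c"
    and dm: "d \<le> real m"
  shows "measure_pmf.prob (gt_pmf p k n \<nu> \<rho>)
           {(S, X, Y). \<exists>i\<in>S. Mplus n S X Y i = 0 \<and> real (Mminus n S X Y i) \<ge> d} \<ge> c"
proof -
  define SS where "SS = {S. S \<subseteq> {1..p} \<and> card S = k}"
  have fin: "finite SS" unfolding SS_def by (rule finite_subset[of _ "Pow {1..p}"]) auto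
  have ne: "SS \<noteq> {}"
  proof -
    have "{1..k} \<in> SS" unfolding SS_def using kp by auto
    thus ?thesis by blast
  qed
  show ?thesis
    unfolding gt_pmf_def SS_def[symmetric]
  proof (rule prob_bind_pmf_ge)
    fix S assume "S \<in> set_pmf (pmf_of_set SS)"
    hence S: "S \<subseteq> {1..p}" "card S = k" using fin ne unfolding SS_def by auto
    let ?E = "{(S, X, Y). \<exists>i\<in>S. Mplus n S X Y i = 0 \<and> real (Mminus n S X Y i) \<ge> d}"
    have eq: "do {X \<leftarrow> Pi_pmf ({0..<n} \<times> {1..p}) False (\<lambda>_. bernoulli_pmf (\<nu> / real k));
                Y \<leftarrow> Pi_pmf {0..<n} False (\<lambda>t. if \<exists>j\<in>S. X (t, j) then bernoulli_pmf (1 - \<rho>) else return_pmf False);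
                return_pmf (S, X, Y)}
          = map_pmf (\<lambda>(X, Y). (S, X, Y)) (JP p n S (\<nu> / real k) \<rho>)"
      unfolding JP_def by (simp add: map_bind_pmf)
    have "c \<le> measure_pmf.prob (JP p n S (\<nu> / real k) \<rho>) {(X, Y). \<exists>i\<in>S. Mplus n S X Y i = 0 \<and> Mminus n S X Y i = m}"
      by (rule H[OF S])
    also have "\<dots> \<le> measure_pmf.prob (JP p n S (\<nu> / real k) \<rho>) ((\<lambda>(X, Y). (S, X, Y)) -` ?E)"
      using dm by (intro measure_pmf.finite_measure_mono) auto
    also have "\<dots> = measure_pmf.prob (map_pmf (\<lambda>(X, Y). (S, X, Y)) (JP p n S (\<nu> / real k) \<rho>)) ?E"
      by simp
    finally show "c \<le> measure_pmf.prob
             (do {X \<leftarrow> Pi_pmf ({0..<n} \<times> {1..p}) False (\<lambda>_. bernoulli_pmf (\<nu> / real k));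
                Y \<leftarrow> Pi_pmf {0..<n} False (\<lambda>t. if \<exists>j\<in>S. X (t, j) then bernoulli_pmf (1 - \<rho>) else return_pmf False);
                return_pmf (S, X, Y)}) ?E"
      unfolding eq .
  qed
qed

lemma nat_ceil_bounds: "x \<ge> 0 \<Longrightarrow> x \<le> real (nat \<lceil>x\<rceil>) \<and> real (nat \<lceil>x\<rceil>) \<le> x + 1"
  by (auto simp: of_nat_nat ceiling_correct)

theorem lemma4:
  fixes \<theta> \<nu> \<rho> \<Psi> \<gamma> :: real and k :: "nat \<Rightarrow> nat"
  assumes "0 < \<theta>" "\<theta> < 1" "0 < \<nu>" "0 < \<rho>" "\<rho> < 1" "\<rho> \<le> \<Psi>" "\<Psi> < 1" "0 < \<gamma>"
    and "(\<lambda>p. real (k p)) \<in> \<Theta>(\<lambda>p. real p powr \<theta>)"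
    and "\<theta> > exp (- \<nu>) * \<nu> * \<gamma> * (Dfun \<rho> \<Psi> + 1 - \<rho>)"
  shows "((\<lambda>p. let n = nat \<lceil>\<gamma> * real (k p) * ln (real p)\<rceil>;
                   d = \<Psi> * \<nu> * exp (- \<nu>) * \<gamma> * ln (real p)
               in measure_pmf.prob (gt_pmf p (k p) n \<nu> \<rho>)
                    {(S, X, Y). \<exists>i\<in>S. Mplus n S X Y i = 0 \<and> real (Mminus n S X Y i) \<ge> d})
          \<longlongrightarrow> 1) at_top"
proof -
  note th = assms(1,2) and nu = assms(3) and rho = assms(4,5) and Psi = assms(6,7) and ga = assms(8)
  define K where "K = (\<lambda>p. real (k p))"
  define L where "L = (\<lambda>p::nat. ln (real p))"
  define a where "a = \<Psi> * \<nu> * exp (- \<nu>) * \<gamma>"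
  define c where "c = \<nu> * exp (- \<nu>) * \<gamma>"
  define nn where "nn = (\<lambda>p. nat \<lceil>\<gamma> * real (k p) * ln (real p)\<rceil>)"
  define mm where "mm = (\<lambda>p. nat \<lceil>\<Psi> * \<nu> * exp (- \<nu>) * \<gamma> * ln (real p)\<rceil>)"
  define q where "q = (\<lambda>p. \<nu> / real (k p))"
  define r where "r = (\<lambda>p. q p * (1 - q p) ^ (k p - 1))"
  define P1 where "P1 = (\<lambda>p. real (nn p choose mm p) * (r p * \<rho>) ^ mm p * (1 - r p) ^ (nn p - mm p))"
  define eps where "eps = (\<lambda>p. 1 / (K p * P1 p) + 1 / (1 - r p) ^ (2 * mm p) - 1)"
  have Kn: "K p \<ge> 0" for p unfolding K_def by simp
  have Psipos: "\<Psi> > 0" using rho Psi by linarith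
  have cpos: "c > 0" unfolding c_def using nu ga by simp
  have apos: "a > 0" unfolding a_def using nu ga Psipos by simp
  have ac: "a = \<Psi> * c" unfolding a_def c_def by (simp add: algebra_simps)
  from bigthetaD1[OF assms(9)] obtain C0 where C0: "C0 > 0"
    "eventually (\<lambda>p. norm (real (k p)) \<le> C0 * norm (real p powr \<theta>)) at_top"
    by (rule landau_o.bigE)
  from bigthetaD2[OF assms(9)] obtain c0 where c0: "c0 > 0"
    "eventually (\<lambda>p. norm (real (k p)) \<ge> c0 * norm (real p powr \<theta>)) at_top"
    by (rule landau_omega.bigE)
  have "eventually (\<lambda>p::nat. C0 * real p powr \<theta> \<le> real p) at_top" using C0(1) th by real_asymp
  with C0(2) c0(2) have Kb: "eventually (\<lambda>p. c0 * real p powr \<theta> \<le> K p \<and> K p \<le> real p) at_top"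
    unfolding K_def by eventually_elim auto
  have Ktop: "filterlim K at_top at_top"
  proof (rule filterlim_at_top_mono[OF _ Kb[THEN eventually_mono]])
    show "filterlim (\<lambda>p::nat. c0 * real p powr \<theta>) at_top at_top" using c0(1) th by real_asymp
  qed auto
  have ktop: "filterlim k at_top at_top"
    unfolding filterlim_at_top
  proof
    fix Z :: nat
    have "eventually (\<lambda>p. real Z \<le> K p) at_top" using Ktop by (simp add: filterlim_at_top)
    thus "eventually (\<lambda>p. Z \<le> k p) at_top" unfolding K_def by (rule eventually_mono) simp
  qed
  have Ltop: "filterlim L at_top at_top" unfolding L_def by real_asymp
  have Linv: "((\<lambda>p. inverse (L p)) \<longlongrightarrow> 0) at_top" by (rule tendsto_inverse_0_at_top[OF Ltop])
  have Kinv: "((\<lambda>p. inverse (K p)) \<longlongrightarrow> 0) at_top" by (rule tendsto_inverse_0_at_top[OF Ktop])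
  have LK: "((\<lambda>p. L p / K p) \<longlongrightarrow> 0) at_top"
  proof (rule tendsto_sandwich[of "\<lambda>_. 0" _ _ "\<lambda>p. L p / (c0 * real p powr \<theta>)"])
    have "eventually (\<lambda>p::nat. p \<ge> 2) at_top" by (rule eventually_ge_at_top)
    with Kb show "eventually (\<lambda>p. 0 \<le> L p / K p) at_top"
      by eventually_elim (auto simp: L_def Kn intro!: divide_nonneg_nonneg)
    have "eventually (\<lambda>p::nat. p \<ge> 2) at_top" by (rule eventually_ge_at_top)
    with Kb show "eventually (\<lambda>p. L p / K p \<le> L p / (c0 * real p powr \<theta>)) at_top"
    proof eventually_elim
      case (elim p)
      have "c0 * real p powr \<theta> > 0" using c0(1) elim by simp
      moreover have "L p \<ge> 0" using elim unfolding L_def by simp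
      ultimately show ?case using elim by (intro divide_left_mono) auto
    qed
    show "((\<lambda>p. L p / (c0 * real p powr \<theta>)) \<longlongrightarrow> 0) at_top" unfolding L_def using c0(1) th by real_asymp
  qed simp
  define B where "B = 1 + 2 * \<nu> + (2 * a + 2) / \<gamma>"
  have EK: "eventually (\<lambda>p. K p \<ge> B) at_top" using Ktop by (simp add: filterlim_at_top)
  have EL: "eventually (\<lambda>p. L p \<ge> 1) at_top" using Ltop by (simp add: filterlim_at_top)
  have Bge: "B \<ge> 1" "B \<ge> 2 * \<nu>" "B > (2 * a + 2) / \<gamma>" unfolding B_def using nu ga apos by (auto intro!: divide_nonneg_pos)
  have kfacts: "k p \<ge> 1 \<and> K p > 0 \<and> q p > 0 \<and> q p \<le> 1/2 \<and> K p * q p = \<nu>" if "K p \<ge> B" for p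
  proof -
    have K1: "K p \<ge> 1" using that Bge by linarith
    hence "k p \<ge> 1" unfolding K_def by simp
    moreover have "q p \<le> 1/2" unfolding q_def using that Bge nu K1 unfolding K_def by (simp add: field_simps)
    moreover have "q p > 0" unfolding q_def using nu K1 unfolding K_def by simp
    moreover have "K p * q p = \<nu>" unfolding q_def K_def using K1 unfolding K_def by simp
    ultimately show ?thesis using K1 by simp
  qed
  have expo: "((\<lambda>p. (1 + (-\<nu>) / real (k p)) ^ k p) \<longlongrightarrow> exp (-\<nu>)) at_top"
    by (rule filterlim_compose[OF tendsto_exp_limit_sequentially ktop])
  have qlim: "(q \<longlongrightarrow> 0) at_top"
  proof -
    have "((\<lambda>p. \<nu> * inverse (K p)) \<longlongrightarrow> \<nu> * 0) at_top" by (intro tendsto_mult tendsto_const Kinv)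
    thus ?thesis unfolding q_def K_def by (simp add: divide_inverse)
  qed
  have Krlim: "((\<lambda>p. K p * r p) \<longlongrightarrow> \<nu> * exp (-\<nu>)) at_top"
  proof -
    have "((\<lambda>p. \<nu> * (1 + (-\<nu>) / real (k p)) ^ k p / (1 - q p)) \<longlongrightarrow> \<nu> * exp (-\<nu>) / (1 - 0)) at_top"
      by (intro tendsto_intros expo qlim) simp
    moreover have "eventually (\<lambda>p. \<nu> * (1 + (-\<nu>) / real (k p)) ^ k p / (1 - q p) = K p * r p) at_top"
      using EK
    proof eventually_elim
      case (elim p)
      note kf = kfacts[OF elim]
      have e1: "1 + (-\<nu>) / real (k p) = 1 - q p" unfolding q_def by simp
      have "(1 - q p) ^ k p = (1 - q p) ^ (k p - 1) * (1 - q p)"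
        using kf by (metis power_minus_mult le_add_diff_inverse2 add_diff_cancel_left' One_nat_def neq0_conv not_one_le_zero)
      moreover have "1 - q p \<noteq> 0" using kf by simp
      ultimately have "\<nu> * (1 - q p) ^ k p / (1 - q p) = \<nu> * (1 - q p) ^ (k p - 1)" by simp
      also have "\<dots> = K p * r p" unfolding r_def mult.assoc[symmetric] using kf by simp
      finally show ?case unfolding e1 .
    qed
    ultimately show ?thesis by (simp add: tendsto_cong)
  qed
  have rlim: "(r \<longlongrightarrow> 0) at_top"
  proof -
    have "((\<lambda>p. (K p * r p) * inverse (K p)) \<longlongrightarrow> (\<nu> * exp (-\<nu>)) * 0) at_top" by (intro tendsto_mult Krlim Kinv)
    moreover have "eventually (\<lambda>p. (K p * r p) * inverse (K p) = r p) at_top"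
      using EK
    proof eventually_elim
      case (elim p)
      hence "K p \<noteq> 0" using kfacts[OF elim] by simp
      thus ?case by simp
    qed
    ultimately show ?thesis by (simp add: tendsto_cong)
  qed
  have nn_eq: "nn p = nat \<lceil>\<gamma> * K p * L p\<rceil>" for p unfolding nn_def K_def L_def ..
  have mm_eq: "mm p = nat \<lceil>a * L p\<rceil>" for p unfolding mm_def a_def L_def ..
  have KLtop: "filterlim (\<lambda>p. K p * L p) at_top at_top" by (rule filterlim_at_top_mult_at_top[OF Ktop Ltop])
  have EKL: "eventually (\<lambda>p. K p \<ge> B \<and> L p \<ge> 1) at_top" using EK EL by eventually_elim simp
  have nb: "\<gamma> \<le> real (nn p) / (K p * L p) \<and> real (nn p) / (K p * L p) \<le> \<gamma> + inverse (K p * L p)"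
    if "K p \<ge> B \<and> L p \<ge> 1" for p
  proof -
    have KL: "K p * L p > 0" using that kfacts[of p] by simp
    have "\<gamma> * K p * L p \<le> real (nn p) \<and> real (nn p) \<le> \<gamma> * K p * L p + 1"
      unfolding nn_eq using KL ga by (intro nat_ceil_bounds) (simp add: mult.assoc)
    moreover have "K p \<noteq> 0" "L p \<noteq> 0" using that kfacts[of p] by auto
    ultimately show ?thesis using KL by (simp add: field_simps)
  qed
  have nKL: "((\<lambda>p. real (nn p) / (K p * L p)) \<longlongrightarrow> \<gamma>) at_top"
  proof (rule tendsto_sandwich[of "\<lambda>_. \<gamma>" _ _ "\<lambda>p. \<gamma> + inverse (K p * L p)"])
    show "eventually (\<lambda>p. \<gamma> \<le> real (nn p) / (K p * L p)) at_top" using EKL by eventually_elim (use nb in blast)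
    show "eventually (\<lambda>p. real (nn p) / (K p * L p) \<le> \<gamma> + inverse (K p * L p)) at_top" using EKL by eventually_elim (use nb in blast)
    have "((\<lambda>p. \<gamma> + inverse (K p * L p)) \<longlongrightarrow> \<gamma> + 0) at_top" by (intro tendsto_intros tendsto_inverse_0_at_top KLtop)
    thus "((\<lambda>p. \<gamma> + inverse (K p * L p)) \<longlongrightarrow> \<gamma>) at_top" by simp
  qed simp
  have mb: "a \<le> real (mm p) / L p \<and> real (mm p) / L p \<le> a + inverse (L p) \<and> mm p \<ge> 1" if "L p \<ge> 1" for p
  proof -
    have "a * L p \<le> real (mm p) \<and> real (mm p) \<le> a * L p + 1"
      unfolding mm_eq using that apos by (intro nat_ceil_bounds) simp
    moreover have "a * L p > 0" using that apos by simp
    ultimately show ?thesis using that by (simp add: field_simps)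
  qed
  have mL: "((\<lambda>p. real (mm p) / L p) \<longlongrightarrow> a) at_top"
  proof (rule tendsto_sandwich[of "\<lambda>_. a" _ _ "\<lambda>p. a + inverse (L p)"])
    show "eventually (\<lambda>p. a \<le> real (mm p) / L p) at_top" using EL by eventually_elim (use mb in blast)
    show "eventually (\<lambda>p. real (mm p) / L p \<le> a + inverse (L p)) at_top" using EL by eventually_elim (use mb in blast)
    have "((\<lambda>p. a + inverse (L p)) \<longlongrightarrow> a + 0) at_top" by (intro tendsto_intros Linv)
    thus "((\<lambda>p. a + inverse (L p)) \<longlongrightarrow> a) at_top" by simp
  qed simp
  have nrL: "((\<lambda>p. real (nn p) * r p / L p) \<longlongrightarrow> c) at_top"
  proof -
    have "((\<lambda>p. (real (nn p) / (K p * L p)) * (K p * r p)) \<longlongrightarrow> \<gamma> * (\<nu> * exp (-\<nu>))) at_top"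
      by (intro tendsto_mult nKL Krlim)
    moreover have "eventually (\<lambda>p. (real (nn p) / (K p * L p)) * (K p * r p) = real (nn p) * r p / L p) at_top"
      using EKL
    proof eventually_elim
      case (elim p)
      hence "K p \<noteq> 0" using kfacts[of p] by simp
      thus ?case by (simp add: field_simps)
    qed
    ultimately show ?thesis unfolding c_def by (simp add: tendsto_cong mult.commute mult.left_commute)
  qed
  have mr: "((\<lambda>p. real (mm p) * r p) \<longlongrightarrow> 0) at_top"
  proof -
    have "((\<lambda>p. (real (mm p) / L p) * (L p / K p) * (K p * r p)) \<longlongrightarrow> a * 0 * (\<nu> * exp (-\<nu>))) at_top"
      by (intro tendsto_mult mL LK Krlim)
    moreover have "eventually (\<lambda>p. (real (mm p) / L p) * (L p / K p) * (K p * r p) = real (mm p) * r p) at_top"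
      using EKL
    proof eventually_elim
      case (elim p)
      hence "K p \<noteq> 0" "L p \<noteq> 0" using kfacts[of p] by auto
      thus ?case by (simp add: field_simps)
    qed
    ultimately show ?thesis by (simp add: tendsto_cong)
  qed
  have xlim: "((\<lambda>p. (real (nn p) - real (mm p)) * r p * \<rho> / real (mm p)) \<longlongrightarrow> \<rho> / \<Psi>) at_top"
  proof -
    have T0: "((\<lambda>p. \<rho> * (real (nn p) * r p / L p - (real (mm p) / L p) * r p) / (real (mm p) / L p)) \<longlongrightarrow> \<rho> * (c - a * 0) / a) at_top"
      using apos by (intro tendsto_intros nrL mL rlim) simp
    have e: "\<rho> * (c - a * 0) / a = \<rho> / \<Psi>" using ac cpos Psipos by simp
    have E: "eventually (\<lambda>p. \<rho> * (real (nn p) * r p / L p - (real (mm p) / L p) * r p) / (real (mm p) / L p)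
                     = (real (nn p) - real (mm p)) * r p * \<rho> / real (mm p)) at_top"
      using EL
    proof eventually_elim
      case (elim p)
      hence "L p \<noteq> 0" "real (mm p) \<noteq> 0" using mb[of p] by auto
      thus ?case by (simp add: field_simps)
    qed
    show ?thesis by (rule Lim_transform_eventually[OF T0[unfolded e] E])
  qed
  have nr2: "((\<lambda>p. real (nn p) * r p ^ 2 / L p) \<longlongrightarrow> 0) at_top"
  proof -
    have "((\<lambda>p. (real (nn p) * r p / L p) * r p) \<longlongrightarrow> c * 0) at_top" by (intro tendsto_mult nrL rlim)
    thus ?thesis by (simp add: power2_eq_square mult.assoc mult.commute mult.left_commute)
  qed
  have lnm: "((\<lambda>p. ln (real (mm p)) / L p) \<longlongrightarrow> 0) at_top"
  proof (rule tendsto_sandwich[of "\<lambda>_. 0" _ _ "\<lambda>p. 2 * sqrt (real (mm p) / L p) * (1 / sqrt (L p))"])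
    show "eventually (\<lambda>p. 0 \<le> ln (real (mm p)) / L p) at_top"
      using EL by eventually_elim (use mb in auto)
    show "eventually (\<lambda>p. ln (real (mm p)) / L p \<le> 2 * sqrt (real (mm p) / L p) * (1 / sqrt (L p))) at_top"
      using EL
    proof eventually_elim
      case (elim p)
      have m1: "real (mm p) \<ge> 1" using mb[OF elim] by simp
      have "ln (sqrt (real (mm p))) \<le> sqrt (real (mm p)) - 1" using m1 by (intro ln_le_minus_one) simp
      hence "ln (real (mm p)) \<le> 2 * sqrt (real (mm p))" using m1 by (simp add: ln_sqrt)
      moreover have "2 * sqrt (real (mm p) / L p) * (1 / sqrt (L p)) = 2 * sqrt (real (mm p)) / L p"
        using elim by (simp add: real_sqrt_divide field_simps)
      ultimately show ?case using elim by (simp add: divide_right_mono)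
    qed
    have "((\<lambda>p. 2 * sqrt (real (mm p) / L p) * (1 / sqrt (L p))) \<longlongrightarrow> 2 * sqrt a * 0) at_top"
    proof (intro tendsto_intros mL)
      show "((\<lambda>p. 1 / sqrt (L p)) \<longlongrightarrow> 0) at_top" unfolding L_def by real_asymp
    qed
    thus "((\<lambda>p. 2 * sqrt (real (mm p) / L p) * (1 / sqrt (L p))) \<longlongrightarrow> 0) at_top" by simp
  qed simp
  define x where "x = (\<lambda>p. (real (nn p) - real (mm p)) * r p * \<rho> / real (mm p))"
  define g where "g = (\<lambda>p. \<theta> * L p + ln c0 + real (mm p) * (ln (x p) + 1) - 1 - ln (real (mm p))
                         - real (nn p) * r p - 2 * real (nn p) * r p ^ 2)"
  define A0 where "A0 = \<theta> + a * (ln (\<rho> / \<Psi>) + 1) - c"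
  have A0pos: "A0 > 0"
  proof -
    have "ln (\<rho> / \<Psi>) = - ln (\<Psi> / \<rho>)" using rho Psipos by (simp add: ln_div)
    hence "A0 = \<theta> - exp (- \<nu>) * \<nu> * \<gamma> * (Dfun \<rho> \<Psi> + 1 - \<rho>)"
      unfolding A0_def Dfun_def ac c_def by (simp add: algebra_simps)
    thus ?thesis using assms(10) by simp
  qed
  have gL: "((\<lambda>p. g p / L p) \<longlongrightarrow> A0) at_top"
  proof -
    have T0: "((\<lambda>p. \<theta> + ln c0 * inverse (L p) + (real (mm p) / L p) * (ln (x p) + 1) - inverse (L p)
               - ln (real (mm p)) / L p - real (nn p) * r p / L p - 2 * (real (nn p) * r p ^ 2 / L p))
             \<longlongrightarrow> \<theta> + ln c0 * 0 + a * (ln (\<rho> / \<Psi>) + 1) - 0 - 0 - c - 2 * 0) at_top"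
      unfolding x_def using rho Psipos by (intro tendsto_intros Linv mL xlim lnm nrL nr2) auto
    have E: "eventually (\<lambda>p. \<theta> + ln c0 * inverse (L p) + (real (mm p) / L p) * (ln (x p) + 1) - inverse (L p)
               - ln (real (mm p)) / L p - real (nn p) * r p / L p - 2 * (real (nn p) * r p ^ 2 / L p) = g p / L p) at_top"
      using EL
    proof eventually_elim
      case (elim p)
      hence "L p \<noteq> 0" by auto
      thus ?case unfolding g_def by (simp add: field_simps)
    qed
    show ?thesis using Lim_transform_eventually[OF T0 E] unfolding A0_def by simp
  qed
  have gtop: "filterlim g at_top at_top"
  proof (rule filterlim_at_top_mono[OF filterlim_tendsto_pos_mult_at_top[OF gL A0pos Ltop]])
    show "eventually (\<lambda>p. g p / L p * L p \<le> g p) at_top" using EL by eventually_elim auto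
  qed
  have ginv: "((\<lambda>p. inverse (exp (g p))) \<longlongrightarrow> 0) at_top"
    by (rule tendsto_inverse_0_at_top[OF filterlim_compose[OF exp_at_top gtop]])
  have Er: "eventually (\<lambda>p. r p < 1/2) at_top" using order_tendstoD(2)[OF rlim, of "1/2"] by simp
  have Emr: "eventually (\<lambda>p. real (mm p) * r p < 1/4) at_top" using order_tendstoD(2)[OF mr, of "1/4"] by simp
  have Eall: "eventually (\<lambda>p. K p \<ge> B \<and> L p \<ge> 1 \<and> (c0 * real p powr \<theta> \<le> K p \<and> K p \<le> real p) \<and> r p < 1/2 \<and> real (mm p) * r p < 1/4) at_top"
    using EK EL Kb Er Emr by eventually_elim blast
  have good: "k p \<ge> 1 \<and> k p \<le> p \<and> 0 < q p \<and> q p \<le> 1 \<and> 0 < r p \<and> r p \<le> 1/2 \<and> 1 \<le> mm p \<and> 2 * mm p < nn p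
       \<and> P1 p > 0 \<and> K p * P1 p \<ge> exp (g p) \<and> 1 - 2 * real (mm p) * r p > 0"
    if H: "K p \<ge> B \<and> L p \<ge> 1 \<and> (c0 * real p powr \<theta> \<le> K p \<and> K p \<le> real p) \<and> r p < 1/2 \<and> real (mm p) * r p < 1/4" for p
  proof -
    note kf = kfacts[of p]
    have k1: "k p \<ge> 1" "K p > 0" "0 < q p" "q p \<le> 1/2" using kf H by auto
    have kp: "k p \<le> p" using H unfolding K_def by simp
    have rpos: "r p > 0" unfolding r_def using k1 by simp
    have m1: "1 \<le> mm p" using mb[of p] H by auto
    have mup: "real (mm p) \<le> (a + 1) * L p"
    proof -
      have "real (mm p) \<le> a * L p + 1" unfolding mm_eq using H apos by (intro nat_ceil_bounds[THEN conjunct2]) simp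
      thus ?thesis using H by (simp add: algebra_simps)
    qed
    have nlow: "\<gamma> * K p * L p \<le> real (nn p)"
      unfolding nn_eq using H k1 ga by (intro nat_ceil_bounds[THEN conjunct1]) (simp add: mult.assoc)
    have "2 * a + 2 < \<gamma> * B" using Bge(3) ga by (simp add: field_simps)
    moreover have "\<gamma> * B \<le> \<gamma> * K p" using H ga by (intro mult_left_mono) auto
    ultimately have "\<gamma> * K p > 2 * a + 2" by linarith
    hence "(2 * a + 2) * L p < \<gamma> * K p * L p" using H by (intro mult_strict_right_mono) auto
    moreover have "2 * real (mm p) \<le> (2 * a + 2) * L p" using mup by (simp add: algebra_simps)
    ultimately have "real (2 * mm p) < real (nn p)" using nlow by simp
    hence nm: "2 * mm p < nn p" by (simp only: of_nat_less_iff)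
    have P1pos: "P1 p > 0" unfolding P1_def using nm rpos rho H by (intro mult_pos_pos zero_less_power) auto
    have KP: "K p * P1 p \<ge> exp (g p)"
    proof -
      have lower: "K p * P1 p \<ge> exp (ln (real (k p)) + real (mm p) * (ln (x p) + 1) - 1 - ln (real (mm p))
              - real (nn p) * r p - 2 * real (nn p) * r p^2)"
        unfolding K_def P1_def x_def using m1 nm rpos H rho k1
        by (intro kP1_lower) auto
      have p0: "real p > 0" using H k1 kp by simp
      have "ln (real (k p)) \<ge> ln (c0 * real p powr \<theta>)" using H c0 p0 unfolding K_def by (intro ln_mono) auto
      also have "ln (c0 * real p powr \<theta>) = ln c0 + \<theta> * L p" unfolding L_def using c0 p0 by (simp add: ln_mult ln_powr)
      finally have "ln (real (k p)) \<ge> ln c0 + \<theta> * L p" .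
      hence "exp (g p) \<le> exp (ln (real (k p)) + real (mm p) * (ln (x p) + 1) - 1 - ln (real (mm p))
              - real (nn p) * r p - 2 * real (nn p) * r p^2)" unfolding g_def by simp
      with lower show ?thesis by linarith
    qed
    show ?thesis using k1 kp rpos m1 nm P1pos KP H by auto
  qed
  have part1: "((\<lambda>p. 1 / (K p * P1 p)) \<longlongrightarrow> 0) at_top"
  proof (rule tendsto_sandwich[of "\<lambda>_. 0" _ _ "\<lambda>p. inverse (exp (g p))"])
    show "eventually (\<lambda>p. 0 \<le> 1 / (K p * P1 p)) at_top"
      using Eall
    proof eventually_elim
      case (elim p)
      have "P1 p > 0" using good[OF elim] by blast
      thus ?case using Kn[of p] by simp
    qed
    show "eventually (\<lambda>p. 1 / (K p * P1 p) \<le> inverse (exp (g p))) at_top"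
      using Eall
    proof eventually_elim
      case (elim p)
      have "K p * P1 p \<ge> exp (g p)" using good[OF elim] by blast
      hence "inverse (K p * P1 p) \<le> inverse (exp (g p))" by (intro le_imp_inverse_le) auto
      thus ?case by (simp only: divide_inverse mult_1_left)
    qed
  qed (use ginv in auto)
  have part2: "((\<lambda>p. 1 / (1 - r p) ^ (2 * mm p)) \<longlongrightarrow> 1) at_top"
  proof (rule tendsto_sandwich[of "\<lambda>_. 1" _ _ "\<lambda>p. 1 / (1 - 2 * real (mm p) * r p)"])
    show "eventually (\<lambda>p. 1 \<le> 1 / (1 - r p) ^ (2 * mm p)) at_top"
      using Eall
    proof eventually_elim
      case (elim p)
      have r: "0 < r p" "r p \<le> 1/2" using good[OF elim] by auto
      have "(1 - r p) ^ (2 * mm p) \<le> 1" using r by (intro power_le_one) auto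
      moreover have "(1 - r p) ^ (2 * mm p) > 0" using r by simp
      ultimately show ?case by simp
    qed
    show "eventually (\<lambda>p. 1 / (1 - r p) ^ (2 * mm p) \<le> 1 / (1 - 2 * real (mm p) * r p)) at_top"
      using Eall
    proof eventually_elim
      case (elim p)
      have r: "0 < r p" "r p \<le> 1/2" "1 - 2 * real (mm p) * r p > 0" using good[OF elim] by auto
      have "1 + real (2 * mm p) * (- r p) \<le> (1 + (- r p)) ^ (2 * mm p)"
        using r by (intro Bernoulli_inequality) simp
      hence "1 - 2 * real (mm p) * r p \<le> (1 - r p) ^ (2 * mm p)" by simp
      thus ?case using r by (intro divide_left_mono) auto
    qed
    have "((\<lambda>p. 1 / (1 - 2 * (real (mm p) * r p))) \<longlongrightarrow> 1 / (1 - 2 * 0)) at_top"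
      by (intro tendsto_intros mr) simp
    thus "((\<lambda>p. 1 / (1 - 2 * real (mm p) * r p)) \<longlongrightarrow> 1) at_top" by (simp add: mult.assoc)
  qed simp
  have epslim: "((\<lambda>p. 1 - eps p) \<longlongrightarrow> 1) at_top"
  proof -
    have "((\<lambda>p. 1 - (1 / (K p * P1 p) + 1 / (1 - r p) ^ (2 * mm p) - 1)) \<longlongrightarrow> 1 - (0 + 1 - 1)) at_top"
      by (intro tendsto_intros part1 part2)
    thus ?thesis unfolding eps_def by simp
  qed
  define prb where "prb = (\<lambda>p. measure_pmf.prob (gt_pmf p (k p) (nn p) \<nu> \<rho>)
                    {(S, X, Y). \<exists>i\<in>S. Mplus (nn p) S X Y i = 0 \<and> real (Mminus (nn p) S X Y i) \<ge> a * L p})"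
  have lowb: "eventually (\<lambda>p. 1 - eps p \<le> prb p) at_top"
    using Eall
  proof eventually_elim
    case (elim p)
    note gd = good[OF elim]
    show ?case unfolding prb_def
    proof (rule gt_lower)
      show "k p \<le> p" using gd by simp
      show "a * L p \<le> real (mm p)" unfolding mm_eq using elim apos by (intro nat_ceil_bounds[THEN conjunct1]) simp
      fix S assume S: "S \<subseteq> {1..p}" "card S = k p"
      have "1 - (1 / (real (k p) * P1 p) + 1 / (1 - r p) ^ (2 * mm p) - 1)
            \<le> measure_pmf.prob (JP p (nn p) S (q p) \<rho>)
                {(X, Y). \<exists>i\<in>S. Mplus (nn p) S X Y i = 0 \<and> Mminus (nn p) S X Y i = mm p}"
        using S gd rho by (intro perS[where r="r p"]) (auto simp: r_def P1_def)
      thus "1 - eps p \<le> measure_pmf.prob (JP p (nn p) S (\<nu> / real (k p)) \<rho>)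
                {(X, Y). \<exists>i\<in>S. Mplus (nn p) S X Y i = 0 \<and> Mminus (nn p) S X Y i = mm p}"
        unfolding eps_def K_def q_def by simp
    qed
  qed
  have upb: "eventually (\<lambda>p. prb p \<le> 1) at_top" unfolding prb_def by (simp add: measure_pmf.prob_le_1)
  have "(prb \<longlongrightarrow> 1) at_top" by (rule tendsto_sandwich[OF lowb upb epslim tendsto_const])
  moreover have "prb = (\<lambda>p. let n = nat \<lceil>\<gamma> * real (k p) * ln (real p)\<rceil>;
                   d = \<Psi> * \<nu> * exp (- \<nu>) * \<gamma> * ln (real p)
               in measure_pmf.prob (gt_pmf p (k p) n \<nu> \<rho>)
                    {(S, X, Y). \<exists>i\<in>S. Mplus n S X Y i = 0 \<and> real (Mminus n S X Y i) \<ge> d})"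
    unfolding prb_def Let_def nn_def a_def L_def ..
  ultimately show ?thesis by simp
qed

end
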